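(* Let $\mathcal{F}=\langle\mathbb{A},(\mu_i)_{i\in\mathsf{Ag}}\rangle$ be an APE-structure and $\mathbb{E}=(E,(\sim_i),(P_i),\Phi,\mathsf{pre})$ a probabilistic event structure over $\mathbb{A}$. Then the intermediate structure $\prod_{\mathbb{E}}\mathcal{F}=\langle\prod_{\mathbb{E}}\mathbb{A},(\mu'_i)_{i\in\mathsf{Ag}}\rangle$ is an ApPE-structure. Furthermore, if $y\in\prod_{\mathbb{E}}\mathbb{A}$ satisfies $\bigvee_{a\in\Phi}a\leq y(e)$ for every $e\in E$, then $\mu'_i(x)=\mu'_i(x\wedge y)$ for every $x$ in the domain of $\mu'_i$.
   Context: Fix a set $\mathsf{Ag}$ of agents. A monadic Heyting algebra is a Heyting algebra $\mathbb{L}$ with, for each $i\in\mathsf{Ag}$, monotone unary operations $\lozenge_i,\Box_i$ such that for all $a,b$: $a\leq\lozenge_i a$; $\Box_i a\leq a$; $\lozenge_i(a\vee b)\leq\lozenge_i a\vee\lozenge_i b$; $\Box_i(a\to b)\leq\Box_i a\to\Box_i b$; $\lozenge_i a\leq\Box_i\lozenge_i a$; $\lozenge_i\Box_i a\leq\Box_i a$; $\Box_i(a\to b)\leq\lozenge_i a\to\lozenge_i b$; $\lozenge_i\bot\leq\bot$; $\top\leq\Box_i\top$. An epistemic Heyting algebra is a finite monadic Heyting algebra with $\lozenge_i a\vee\neg\lozenge_i a=\top$ for all $i,a$. An element $a$ is $i$-minimal if $a\neq\bot$, $\lozenge_i a=a$, and whenever $b<a$ and $\lozenge_i b=b$ then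 $b=\bot$; $\mathsf{Min}_i(\mathbb{A})$ is the set of $i$-minimal elements. A partial map $\mu:\mathbb{A}\to\mathbb{R}^+$ is an $i$-premeasure if: (1) $\mathsf{dom}(\mu)=\mathsf{Min}_i(\mathbb{A}){\downarrow}$; (2) $\mu$ is order-preserving; (3) for every $a\in\mathsf{Min}_i(\mathbb{A})$ and $b,c\leq a$, $\mu(b\vee c)=\mu(b)+\mu(c)-\mu(b\wedge c)$; (4) $\mu(\bot)=0$ if $\mathsf{dom}(\mu)\neq\varnothing$. It is an $i$-measure if also (5) for $a\in\mathsf{Min}_i(\mathbb{A})$ and $b<c\leq a$, $\mu(b)<\mu(c)$; (6) $\mu(a)=1$ for $a\in\mathsf{Min}_i(\mathbb{A})$. An ApPE-structure (resp. APE-structure) is $\langle\mathbb{A},(\mu_i)_{i\in\mathsf{Ag}}\rangle$ with $\mathbb{A}$ an epistemic Heyting algebra and each $\mu_i$ an $i$-premeasure (resp. $i$-measure). A pre-ordered multiset on $X$ is a multiset in which the copies $x_1,\dots,x_n$ of an element carry the linear order $x_1\prec\cdots\prec x_n$. A probabilistic event structure over $\mathbb{A}$ is $(E,(\sim_i),(P_i),\Phi,\mathsf{pre})$: $E$ non-empty finite; $\sim_i$ equivalence relations on $E$; $P_i:E\to\,]0,1]$ with $\sum\{P_i(e')\mid e'\sim_i e\}=1$; $\Phi$ a finite pre-ordered multiset on $\mathbb{A}$ such that any $a,b\in\Phi$ arising from distinct elements satisfy $a\wedge b=\bot$ or $a<b$ or $b<a$; $\mathsf{pre}(\bullet\mid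 a)$ a probability distribution on $E$ for each $a\in\Phi$; and if $\mathsf{pre}(e\mid a)=0$ then $\mathsf{pre}(e\mid b)=0$ for $b\in\Phi$ with $a<b$ (distinct elements) or $a\prec b$ (copies). For $a\in\Phi$, $\mathrm{mb}(a)$ is the set of maximal elements of $\Phi\cap({\downarrow}a\setminus\{a\})$, and $\mu^a_i(x):=\mu_i(x\wedge a)-\sum_{b\in\mathrm{mb}(a)}\mu_i(x\wedge b)$ for $x\in\mathsf{Min}_i(\mathbb{A}){\downarrow}$. The intermediate algebra $\prod_{\mathbb{E}}\mathbb{A}$ has as carrier all maps $f:E\to\mathbb{A}$, pointwise Heyting operations, $(\lozenge'_i f)(e)=\bigvee\{\lozenge_i f(e')\mid e'\sim_i e\}$ and $(\Box'_i f)(e)=\bigwedge\{\Box_i f(e')\mid e'\sim_i e\}$. The intermediate structure $\prod_{\mathbb{E}}\mathcal{F}$ equips it with $\mu'_i:\mathsf{Min}_i(\prod_{\mathbb{E}}\mathbb{A}){\downarrow}\to\mathbb{R}^+$, $\mu'_i(f)=\sum_{e\in E}\sum_{a\in\Phi}P_i(e)\cdot\mu^a_i(f(e))\cdot\mathsf{pre}(e\mid a)$ ($i$-minimality in $\prod_{\mathbb{E}}\mathbb{A}$ taken w.r.t. $\lozenge'_i$). *)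

theory Defs
  imports Complex_Main
begin

text \<open>A Heyting algebra is represented by a type 'a of class bounded_lattice
  (carrier = UNIV, lattice order = the class order) together with an implication
  operation satisfying the residuation law.\<close>

definition heyting_imp :: "('a::bounded_lattice \<Rightarrow> 'a \<Rightarrow> 'a) \<Rightarrow> bool" where
  "heyting_imp imp \<longleftrightarrow> (\<forall>a b c. c \<le> imp a b \<longleftrightarrow> inf c a \<le> b)"

definition monadic_HA ::
  "('a::bounded_lattice \<Rightarrow> 'a \<Rightarrow> 'a) \<Rightarrow> ('i \<Rightarrow> 'a \<Rightarrow> 'a) \<Rightarrow> ('i \<Rightarrow> 'a \<Rightarrow> 'a) \<Rightarrow> bool" where
  "monadic_HA imp dia box \<longleftrightarrow> heyting_imp imp \<and>
     (\<forall>i. mono (dia i) \<and> mono (box i) \<and>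
       (\<forall>a b.
          a \<le> dia i a \<and>
          box i a \<le> a \<and>
          dia i (sup a b) \<le> sup (dia i a) (dia i b) \<and>
          box i (imp a b) \<le> imp (box i a) (box i b) \<and>
          dia i a \<le> box i (dia i a) \<and>
          dia i (box i a) \<le> box i a \<and>
          box i (imp a b) \<le> imp (dia i a) (dia i b)) \<and>
       dia i bot \<le> bot \<and>
       top \<le> box i top)"

definition epistemic_HA ::
  "('a::bounded_lattice \<Rightarrow> 'a \<Rightarrow> 'a) \<Rightarrow> ('i \<Rightarrow> 'a \<Rightarrow> 'a) \<Rightarrow> ('i \<Rightarrow> 'a \<Rightarrow> 'a) \<Rightarrow> bool" where
  "epistemic_HA imp dia box \<longleftrightarrow> finite (UNIV :: 'a set) \<and> monadic_HA imp dia box \<and>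
     (\<forall>i a. sup (dia i a) (imp (dia i a) bot) = top)"

definition i_minimal :: "('a::bounded_lattice \<Rightarrow> 'a) \<Rightarrow> 'a \<Rightarrow> bool" where
  "i_minimal d a \<longleftrightarrow> a \<noteq> bot \<and> d a = a \<and> (\<forall>b. b < a \<and> d b = b \<longrightarrow> b = bot)"

definition Min_i :: "('a::bounded_lattice \<Rightarrow> 'a) \<Rightarrow> 'a set" where
  "Min_i d = {a. i_minimal d a}"

definition MinDown :: "('a::bounded_lattice \<Rightarrow> 'a) \<Rightarrow> 'a set" where
  "MinDown d = {x. \<exists>a\<in>Min_i d. x \<le> a}"

text \<open>Partial maps into the non-negative reals are modelled as option-valued maps.\<close>

definition premeasure :: "('a::bounded_lattice \<Rightarrow> 'a) \<Rightarrow> ('a \<Rightarrow> real option) \<Rightarrow> bool" where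
  "premeasure d m \<longleftrightarrow>
     dom m = MinDown d \<and>
     (\<forall>x\<in>dom m. 0 \<le> the (m x)) \<and>
     (\<forall>x\<in>dom m. \<forall>y\<in>dom m. x \<le> y \<longrightarrow> the (m x) \<le> the (m y)) \<and>
     (\<forall>a\<in>Min_i d. \<forall>b c. b \<le> a \<longrightarrow> c \<le> a \<longrightarrow>
        the (m (sup b c)) = the (m b) + the (m c) - the (m (inf b c))) \<and>
     (dom m \<noteq> {} \<longrightarrow> m bot = Some 0)"

definition i_measure :: "('a::bounded_lattice \<Rightarrow> 'a) \<Rightarrow> ('a \<Rightarrow> real option) \<Rightarrow> bool" where
  "i_measure d m \<longleftrightarrow> premeasure d m \<and>
     (\<forall>a\<in>Min_i d. \<forall>b c. b < c \<longrightarrow> c \<le> a \<longrightarrow> the (m b) < the (m c)) \<and>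
     (\<forall>a\<in>Min_i d. m a = Some 1)"

definition ApPE ::
  "('a::bounded_lattice \<Rightarrow> 'a \<Rightarrow> 'a) \<Rightarrow> ('i \<Rightarrow> 'a \<Rightarrow> 'a) \<Rightarrow> ('i \<Rightarrow> 'a \<Rightarrow> 'a)
   \<Rightarrow> ('i \<Rightarrow> 'a \<Rightarrow> real option) \<Rightarrow> bool" where
  "ApPE imp dia box mu \<longleftrightarrow> epistemic_HA imp dia box \<and> (\<forall>i. premeasure (dia i) (mu i))"

definition APE ::
  "('a::bounded_lattice \<Rightarrow> 'a \<Rightarrow> 'a) \<Rightarrow> ('i \<Rightarrow> 'a \<Rightarrow> 'a) \<Rightarrow> ('i \<Rightarrow> 'a \<Rightarrow> 'a)
   \<Rightarrow> ('i \<Rightarrow> 'a \<Rightarrow> real option) \<Rightarrow> bool" where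
  "APE imp dia box mu \<longleftrightarrow> epistemic_HA imp dia box \<and> (\<forall>i. i_measure (dia i) (mu i))"

text \<open>The set of events E is the (finite) universe of a type 'e.
  The pre-ordered multiset Phi is a list phi of elements of the algebra: its tokens are the
  positions 0..<length phi, and copies of the same element are linearly ordered by position.\<close>

definition tok_lt :: "'a::order list \<Rightarrow> nat \<Rightarrow> nat \<Rightarrow> bool" where
  "tok_lt phi p q \<longleftrightarrow> p < length phi \<and> q < length phi \<and>
     (phi ! p < phi ! q \<or> (phi ! p = phi ! q \<and> p < q))"

definition prob_event_structure ::
  "('i \<Rightarrow> 'e \<Rightarrow> 'e \<Rightarrow> bool) \<Rightarrow> ('i \<Rightarrow> 'e \<Rightarrow> real) \<Rightarrow> 'a::bounded_lattice list
   \<Rightarrow> (nat \<Rightarrow> 'e \<Rightarrow> real) \<Rightarrow> bool" where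
  "prob_event_structure R P phi pre \<longleftrightarrow>
     finite (UNIV :: 'e set) \<and>
     (\<forall>i. equivp (R i)) \<and>
     (\<forall>i e. 0 < P i e \<and> P i e \<le> 1) \<and>
     (\<forall>i e. (\<Sum>e'\<in>{e'. R i e' e}. P i e') = 1) \<and>
     (\<forall>p<length phi. \<forall>q<length phi. phi ! p \<noteq> phi ! q \<longrightarrow>
        inf (phi ! p) (phi ! q) = bot \<or> phi ! p < phi ! q \<or> phi ! q < phi ! p) \<and>
     (\<forall>p<length phi. (\<forall>e. 0 \<le> pre p e) \<and> (\<Sum>e\<in>UNIV. pre p e) = 1) \<and>
     (\<forall>p<length phi. \<forall>q<length phi. \<forall>e. pre p e = 0 \<longrightarrow> tok_lt phi p q \<longrightarrow> pre q e = 0)"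

definition mb :: "'a::order list \<Rightarrow> nat \<Rightarrow> nat set" where
  "mb phi p = {q. tok_lt phi q p \<and> \<not> (\<exists>r. tok_lt phi r p \<and> tok_lt phi q r)}"

definition mu_tok ::
  "('a::bounded_lattice \<Rightarrow> real option) \<Rightarrow> 'a list \<Rightarrow> nat \<Rightarrow> 'a \<Rightarrow> real" where
  "mu_tok m phi p x = the (m (inf x (phi ! p))) - (\<Sum>q\<in>mb phi p. the (m (inf x (phi ! q))))"

text \<open>Carrier: all maps 'e \<Rightarrow> 'a; lattice operations and order are the pointwise
  ones (Isabelle's function instances); implication is pointwise.\<close>

definition int_imp :: "('a \<Rightarrow> 'a \<Rightarrow> 'a) \<Rightarrow> ('e \<Rightarrow> 'a) \<Rightarrow> ('e \<Rightarrow> 'a) \<Rightarrow> ('e \<Rightarrow> 'a)" where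
  "int_imp imp f g = (\<lambda>e. imp (f e) (g e))"

definition int_dia ::
  "('i \<Rightarrow> 'a::bounded_lattice \<Rightarrow> 'a) \<Rightarrow> ('i \<Rightarrow> 'e \<Rightarrow> 'e \<Rightarrow> bool) \<Rightarrow> 'i \<Rightarrow> ('e \<Rightarrow> 'a) \<Rightarrow> ('e \<Rightarrow> 'a)" where
  "int_dia dia R i f = (\<lambda>e. Sup_fin {dia i (f e') | e'. R i e' e})"

definition int_box ::
  "('i \<Rightarrow> 'a::bounded_lattice \<Rightarrow> 'a) \<Rightarrow> ('i \<Rightarrow> 'e \<Rightarrow> 'e \<Rightarrow> bool) \<Rightarrow> 'i \<Rightarrow> ('e \<Rightarrow> 'a) \<Rightarrow> ('e \<Rightarrow> 'a)" where
  "int_box box R i f = (\<lambda>e. Inf_fin {box i (f e') | e'. R i e' e})"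

definition int_mu ::
  "('i \<Rightarrow> 'a::bounded_lattice \<Rightarrow> 'a) \<Rightarrow> ('i \<Rightarrow> 'a \<Rightarrow> real option) \<Rightarrow> ('i \<Rightarrow> 'e \<Rightarrow> 'e \<Rightarrow> bool)
   \<Rightarrow> ('i \<Rightarrow> 'e \<Rightarrow> real) \<Rightarrow> 'a list \<Rightarrow> (nat \<Rightarrow> 'e \<Rightarrow> real) \<Rightarrow> 'i \<Rightarrow> ('e \<Rightarrow> 'a) \<Rightarrow> real option" where
  "int_mu dia mu R P phi pre i f =
     (if f \<in> MinDown (int_dia dia R i)
      then Some (\<Sum>e\<in>UNIV. \<Sum>p<length phi. P i e * mu_tok (mu i) phi p (f e) * pre p e)
      else None)"

end

theory Submission
  imports Defs
begin


lemma heyting_distrib: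
  fixes imp :: "'a::bounded_lattice \<Rightarrow> 'a \<Rightarrow> 'a"
  assumes "heyting_imp imp"
  shows "inf c (sup a b) = sup (inf c a) (inf c (b::'a::bounded_lattice))"
proof (rule antisym)
  let ?s = "sup (inf c a) (inf c b)"
  have H: "\<And>x y z. z \<le> imp x y \<longleftrightarrow> inf z x \<le> y" using assms unfolding heyting_imp_def by blast
  have "a \<le> imp c ?s" using H by (simp add: inf_commute le_supI1)
  moreover have "b \<le> imp c ?s" using H by (simp add: inf_commute le_supI2)
  ultimately have "sup a b \<le> imp c ?s" by simp
  then show "inf c (sup a b) \<le> ?s" using H by (simp add: inf_commute)
qed (simp add: le_infI2 inf_mono)

lemma heyting_Sup_fin:
  fixes imp :: "'a::bounded_lattice \<Rightarrow> 'a \<Rightarrow> 'a"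
  assumes "heyting_imp imp" "finite A" "A \<noteq> {}" "\<And>a. a \<in> A \<Longrightarrow> inf x a \<le> s"
  shows "inf x (Sup_fin A) \<le> (s::'a::bounded_lattice)"
proof -
  have H: "\<And>x y z. z \<le> imp x y \<longleftrightarrow> inf z x \<le> y" using assms(1) unfolding heyting_imp_def by blast
  have "Sup_fin A \<le> imp x s"
    using assms(2,3) by (rule Sup_fin.boundedI) (use assms(4) H in \<open>simp add: inf_commute\<close>)
  then show ?thesis using H by (simp add: inf_commute)
qed

lemma fin_set: "finite (UNIV::'e set) \<Longrightarrow> finite {F e' | e'::'e. Q e'}"
  by (rule finite_image_set) (rule finite_subset[of _ UNIV], auto)

lemma fin_fun: "finite (UNIV::'e set) \<Longrightarrow> finite (UNIV::'a set) \<Longrightarrow> finite (UNIV::('e\<Rightarrow>'a) set)"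
  using finite_set_of_finite_funs[of "UNIV::'e set" "UNIV::'a set" undefined] by simp



context
  fixes imp :: "'a::bounded_lattice \<Rightarrow> 'a \<Rightarrow> 'a"
    and dia box :: "'i \<Rightarrow> 'a \<Rightarrow> 'a"
  assumes M: "monadic_HA imp dia box"
begin

lemma mH_imp: "heyting_imp imp" using M unfolding monadic_HA_def by blast
lemma mH_H: "z \<le> imp x y \<longleftrightarrow> inf z x \<le> y" using mH_imp unfolding heyting_imp_def by blast
lemma mono_dia: "a \<le> b \<Longrightarrow> dia i a \<le> dia i b" using M unfolding monadic_HA_def mono_def by blast
lemma mono_box: "a \<le> b \<Longrightarrow> box i a \<le> box i b" using M unfolding monadic_HA_def mono_def by blast
lemma infl: "a \<le> dia i a" using M unfolding monadic_HA_def by blast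
lemma defl: "box i a \<le> a" using M unfolding monadic_HA_def by blast
lemma dia_sup: "dia i (sup a b) \<le> sup (dia i a) (dia i b)" using M unfolding monadic_HA_def by blast
lemma box_K: "box i (imp a b) \<le> imp (box i a) (box i b)" using M unfolding monadic_HA_def by blast
lemma dia_box: "dia i a \<le> box i (dia i a)" using M unfolding monadic_HA_def by blast
lemma box_dia: "dia i (box i a) \<le> box i a" using M unfolding monadic_HA_def by blast
lemma box_imp_dia: "box i (imp a b) \<le> imp (dia i a) (dia i b)" using M unfolding monadic_HA_def by blast
lemma dia_bot: "dia i bot = bot" using M unfolding monadic_HA_def by (simp add: bot_unique)
lemma box_top: "box i top = top" using M unfolding monadic_HA_def by (simp add: top_unique)

lemma dia_idem: "dia i (dia i a) = dia i a"
proof (rule antisym)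
  have "dia i (dia i a) \<le> dia i (box i (dia i a))" by (rule mono_dia[OF dia_box])
  also have "\<dots> \<le> box i (dia i a)" by (rule box_dia)
  also have "\<dots> \<le> dia i a" by (rule defl)
  finally show "dia i (dia i a) \<le> dia i a" .
qed (rule infl)

lemma dia_Sup_closed:
  assumes "finite A" "A \<noteq> {}" "\<forall>a\<in>A. dia i a = a"
  shows "dia i (Sup_fin A) = Sup_fin A"
  using assms
proof (induction A rule: finite_ne_induct)
  case (singleton x) then show ?case by simp
next
  case (insert x F)
  have "dia i (sup x (Sup_fin F)) \<le> sup (dia i x) (dia i (Sup_fin F))" by (rule dia_sup)
  also have "\<dots> = sup x (Sup_fin F)" using insert by simp
  finally show ?case using insert infl by (simp add: antisym)
qed

end



context
  fixes imp :: "'a::bounded_lattice \<Rightarrow> 'a \<Rightarrow> 'a"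
    and dia box :: "'i \<Rightarrow> 'a \<Rightarrow> 'a"
    and R :: "'i \<Rightarrow> 'e \<Rightarrow> 'e \<Rightarrow> bool"
  assumes M: "monadic_HA imp dia box"
    and EQ: "\<forall>i. equivp (R i)"
    and FE: "finite (UNIV::'e set)"
begin

lemma Rrefl: "R i e e" using EQ by (meson equivp_reflp)
lemma Rsym: "R i a b \<Longrightarrow> R i b a" using EQ by (meson equivp_symp)
lemma Rtrans: "R i a b \<Longrightarrow> R i b c \<Longrightarrow> R i a c" using EQ by (meson equivp_transp)

lemma Sfin: "finite {G e' |e'. R i e' e}" using fin_set[OF FE] .
lemma Sne: "{G e' |e'. R i e' e} \<noteq> {}" using Rrefl by blast
lemma Smem: "R i e' e \<Longrightarrow> G e' \<in> {G e' |e'. R i e' e}" by blast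

lemmas Sf = Sfin Sne Sup_fin.bounded_iff[OF Sfin Sne] Inf_fin.bounded_iff[OF Sfin Sne]

lemma Sup_le: "(\<And>e'. R i e' e \<Longrightarrow> G e' \<le> x) \<Longrightarrow> Sup_fin {G e' |e'. R i e' e} \<le> x"
  using Sup_fin.bounded_iff[OF Sfin Sne] by blast
lemma le_Sup: "R i e' e \<Longrightarrow> x \<le> G e' \<Longrightarrow> x \<le> Sup_fin {G e' |e'. R i e' e}"
  using Sup_fin.coboundedI[OF Sfin Smem] order_trans by blast
lemma le_Inf: "(\<And>e'. R i e' e \<Longrightarrow> x \<le> G e') \<Longrightarrow> x \<le> Inf_fin {G e' |e'. R i e' e}"
  using Inf_fin.bounded_iff[OF Sfin Sne] by blast
lemma Inf_le: "R i e' e \<Longrightarrow> G e' \<le> x \<Longrightarrow> Inf_fin {G e' |e'. R i e' e} \<le> x"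
  using Inf_fin.coboundedI[OF Sfin Smem] order_trans by blast

lemma Sset_class:
  assumes "R i e1 e2" shows "{G e' |e'. R i e' e1} = {G e' |e'. R i e' e2}"
proof -
  have "\<And>e'. R i e' e1 = R i e' e2" using assms Rtrans Rsym by metis
  then show ?thesis by simp
qed

lemma int_dia_class: "R i e1 e2 \<Longrightarrow> int_dia dia R i f e1 = int_dia dia R i f e2"
  unfolding int_dia_def by (simp only: Sset_class[of i e1 e2])
lemma int_box_class: "R i e1 e2 \<Longrightarrow> int_box box R i f e1 = int_box box R i f e2"
  unfolding int_box_def by (simp only: Sset_class[of i e1 e2])

lemma int_dia_closed: "dia i (int_dia dia R i f e) = int_dia dia R i f e"
  unfolding int_dia_def
  by (rule dia_Sup_closed[OF M Sfin Sne]) (auto simp: dia_idem[OF M])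

lemma int_monadic: "monadic_HA (int_imp imp) (int_dia dia R) (int_box box R)"
  unfolding monadic_HA_def
proof (intro conjI allI)
  show "heyting_imp (int_imp imp)"
    unfolding heyting_imp_def int_imp_def le_fun_def inf_fun_def using mH_H[OF M] by blast
next
  fix i
  show "mono (int_dia dia R i)"
    unfolding mono_def le_fun_def int_dia_def
    by (intro allI impI Sup_le le_Sup) (auto intro: mono_dia[OF M])
  show "mono (int_box box R i)"
    unfolding mono_def le_fun_def int_box_def
    by (intro allI impI Inf_le le_Inf) (auto intro: mono_box[OF M])
  show "int_dia dia R i bot \<le> bot"
    unfolding le_fun_def int_dia_def by (intro allI Sup_le) (simp add: dia_bot[OF M])
  show "top \<le> int_box box R i top"
    unfolding le_fun_def int_box_def by (intro allI le_Inf) (simp add: box_top[OF M])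
    fix a b :: "'e \<Rightarrow> 'a"
    show "a \<le> int_dia dia R i a"
      unfolding le_fun_def int_dia_def by (intro allI, rule le_Sup[OF Rrefl], rule infl[OF M])
    show "int_box box R i a \<le> a"
      unfolding le_fun_def int_box_def by (intro allI, rule Inf_le[OF Rrefl], rule defl[OF M])
    show "int_dia dia R i (sup a b) \<le> sup (int_dia dia R i a) (int_dia dia R i b)"
      unfolding le_fun_def
    proof
      fix e
      show "int_dia dia R i (sup a b) e \<le> sup (int_dia dia R i a) (int_dia dia R i b) e"
        unfolding int_dia_def sup_fun_def
      proof (rule Sup_le)
        fix e' assume "R i e' e"
        have "dia i (sup (a e') (b e')) \<le> sup (dia i (a e')) (dia i (b e'))" by (rule dia_sup[OF M])
        also have "\<dots> \<le> sup (Sup_fin {dia i (a e') |e'. R i e' e}) (Sup_fin {dia i (b e') |e'. R i e' e})"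
          using \<open>R i e' e\<close> by (intro sup_mono le_Sup) auto
        finally show "dia i (sup (a e') (b e')) \<le> sup (Sup_fin {dia i (a e') |e'. R i e' e}) (Sup_fin {dia i (b e') |e'. R i e' e})" .
      qed
    qed
    show "int_box box R i (int_imp imp a b) \<le> int_imp imp (int_box box R i a) (int_box box R i b)"
      unfolding le_fun_def
    proof
      fix e
      show "int_box box R i (int_imp imp a b) e \<le> int_imp imp (int_box box R i a) (int_box box R i b) e"
        unfolding int_imp_def mH_H[OF M]
        unfolding int_box_def
      proof (rule le_Inf)
        fix e' assume r: "R i e' e"
        have "inf (Inf_fin {box i (imp (a e') (b e')) |e'. R i e' e}) (Inf_fin {box i (a e') |e'. R i e' e})
              \<le> inf (box i (imp (a e') (b e'))) (box i (a e'))"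
          using r by (intro inf_mono Inf_le) auto
        also have "\<dots> \<le> box i (b e')" using box_K[OF M] mH_H[OF M] by blast
        finally show "inf (Inf_fin {box i (imp (a e') (b e')) |e'. R i e' e}) (Inf_fin {box i (a e') |e'. R i e' e})
              \<le> box i (b e')" .
      qed
    qed
    show "int_dia dia R i a \<le> int_box box R i (int_dia dia R i a)"
      unfolding le_fun_def
    proof
      fix e
      show "int_dia dia R i a e \<le> int_box box R i (int_dia dia R i a) e"
        unfolding int_box_def[of box R i "int_dia dia R i a"]
      proof (rule le_Inf)
        fix e' assume r: "R i e' e"
        have "int_dia dia R i a e = dia i (int_dia dia R i a e)" using int_dia_closed by simp
        also have "\<dots> \<le> box i (dia i (int_dia dia R i a e))" by (rule dia_box[OF M])
        also have "\<dots> = box i (int_dia dia R i a e')" using int_dia_closed int_dia_class[OF r] by simp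
        finally show "int_dia dia R i a e \<le> box i (int_dia dia R i a e')" .
      qed
    qed
    show "int_dia dia R i (int_box box R i a) \<le> int_box box R i a"
      unfolding le_fun_def
    proof
      fix e
      show "int_dia dia R i (int_box box R i a) e \<le> int_box box R i a e"
        unfolding int_dia_def[of dia R i "int_box box R i a"]
      proof (rule Sup_le)
        fix e' assume r: "R i e' e"
        have eq: "int_box box R i a e' = int_box box R i a e" using int_box_class[OF r] .
        show "dia i (int_box box R i a e') \<le> int_box box R i a e"
          unfolding eq
          unfolding int_box_def[of box R i a]
        proof (rule le_Inf)
          fix e'' assume r2: "R i e'' e"
          have "dia i (Inf_fin {box i (a e') |e'. R i e' e}) \<le> dia i (box i (a e''))"
            using r2 by (intro mono_dia[OF M] Inf_le) auto
          also have "\<dots> \<le> box i (a e'')" by (rule box_dia[OF M])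
          finally show "dia i (Inf_fin {box i (a e') |e'. R i e' e}) \<le> box i (a e'')" .
        qed
      qed
    qed
    show "int_box box R i (int_imp imp a b) \<le> int_imp imp (int_dia dia R i a) (int_dia dia R i b)"
      unfolding le_fun_def
    proof
      fix e
      show "int_box box R i (int_imp imp a b) e \<le> int_imp imp (int_dia dia R i a) (int_dia dia R i b) e"
        unfolding int_imp_def mH_H[OF M]
        unfolding int_dia_def[of dia R i a]
      proof (rule heyting_Sup_fin[OF mH_imp[OF M] Sfin Sne])
        fix x assume "x \<in> {dia i (a e') |e'. R i e' e}"
        then obtain e' where r: "R i e' e" and x: "x = dia i (a e')" by blast
        have "inf (int_box box R i (\<lambda>e. imp (a e) (b e)) e) x \<le> inf (box i (imp (a e') (b e'))) (dia i (a e'))"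
          unfolding x int_box_def using r by (intro inf_mono Inf_le) auto
        also have "\<dots> \<le> dia i (b e')" using box_imp_dia[OF M] mH_H[OF M] by blast
        also have "\<dots> \<le> int_dia dia R i b e" unfolding int_dia_def using r by (intro le_Sup) auto
        finally show "inf (int_box box R i (\<lambda>e. imp (a e) (b e)) e) x \<le> int_dia dia R i b e" .
      qed
    qed
qed

end



context
  fixes imp :: "'a::bounded_lattice \<Rightarrow> 'a \<Rightarrow> 'a"
    and d :: "'a \<Rightarrow> 'a" and m :: "'a \<Rightarrow> real option"
  assumes H: "heyting_imp imp" and PM: "premeasure d m"
begin

lemma pm_dom: "c \<in> Min_i d \<Longrightarrow> x \<le> c \<Longrightarrow> x \<in> dom m"
  using PM unfolding premeasure_def MinDown_def by blast

lemma pm_mono: "c \<in> Min_i d \<Longrightarrow> x \<le> y \<Longrightarrow> y \<le> c \<Longrightarrow> the (m x) \<le> the (m y)"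
  using PM pm_dom[of c x] pm_dom[of c y] order_trans unfolding premeasure_def by blast

lemma pm_nonneg: "c \<in> Min_i d \<Longrightarrow> x \<le> c \<Longrightarrow> 0 \<le> the (m x)"
  using PM pm_dom[of c x] unfolding premeasure_def by blast

lemma pm_mod: "c \<in> Min_i d \<Longrightarrow> x \<le> c \<Longrightarrow> y \<le> c \<Longrightarrow>
   the (m (sup x y)) = the (m x) + the (m y) - the (m (inf x y))"
  using PM unfolding premeasure_def by blast

lemma pm_bot: "c \<in> Min_i d \<Longrightarrow> the (m bot) = 0"
  using PM pm_dom[of c c] unfolding premeasure_def by auto

lemma sum_join:
  fixes phi :: "'a list"
  assumes c: "c \<in> Min_i d" and fin: "finite S"
    and S: "S \<subseteq> B" and below: "\<forall>q\<in>B. phi ! q \<le> a"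
    and disj: "\<forall>q\<in>B. \<forall>r\<in>B. q \<noteq> r \<longrightarrow> inf (phi ! q) (phi ! r) = bot"
  shows "\<exists>D. D \<le> a \<and> (\<forall>x\<le>c. (\<Sum>q\<in>S. the (m (inf x (phi ! q)))) = the (m (inf x D)))
             \<and> (\<forall>r\<in>B - S. inf D (phi ! r) = bot)"
  using fin S
proof (induction S rule: finite_induct)
  case empty
  show ?case
    by (rule exI[of _ bot]) (simp add: pm_bot[OF c])
next
  case (insert q S)
  then obtain D where D: "D \<le> a" "\<forall>x\<le>c. (\<Sum>q\<in>S. the (m (inf x (phi ! q)))) = the (m (inf x D))"
     "\<forall>r\<in>B - S. inf D (phi ! r) = bot" by auto
  have qB: "q \<in> B" using insert by auto
  have Dq: "inf D (phi ! q) = bot" using D(3) qB insert by auto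
  show ?case
  proof (intro exI[of _ "sup D (phi ! q)"] conjI allI impI ballI)
    show "sup D (phi ! q) \<le> a" using D(1) below qB by simp
  next
    fix x assume x: "x \<le> c"
    have "(\<Sum>q\<in>insert q S. the (m (inf x (phi ! q)))) = the (m (inf x (phi ! q))) + the (m (inf x D))"
      using insert D(2) x by simp
    also have "\<dots> = the (m (sup (inf x D) (inf x (phi ! q)))) + the (m (inf (inf x D) (inf x (phi ! q))))"
      using pm_mod[OF c, of "inf x D" "inf x (phi ! q)"] x by (simp add: le_infI1)
    also have "inf (inf x D) (inf x (phi ! q)) = bot"
      using Dq by (metis inf.assoc inf.commute inf.left_idem inf_bot_right)
    also have "sup (inf x D) (inf x (phi ! q)) = inf x (sup D (phi ! q))"
      using heyting_distrib[OF H] by simp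
    finally show "(\<Sum>q\<in>insert q S. the (m (inf x (phi ! q)))) = the (m (inf x (sup D (phi ! q))))"
      using pm_bot[OF c] by simp
  next
    fix r assume r: "r \<in> B - insert q S"
    have "inf (sup D (phi ! q)) (phi ! r) = sup (inf (phi ! r) D) (inf (phi ! r) (phi ! q))"
      using heyting_distrib[OF H] by (simp add: inf_commute)
    also have "\<dots> = bot" using r D(3) disj qB by (auto simp: inf_commute)
    finally show "inf (sup D (phi ! q)) (phi ! r) = bot" .
  qed
qed

end



definition structP :: "'a::bounded_lattice list \<Rightarrow> bool" where
  "structP phi \<longleftrightarrow> (\<forall>p<length phi. \<forall>q<length phi. phi ! p \<noteq> phi ! q \<longrightarrow>
        inf (phi ! p) (phi ! q) = bot \<or> phi ! p < phi ! q \<or> phi ! q < phi ! p)"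

lemma mb_tok: "q \<in> mb phi p \<Longrightarrow> tok_lt phi q p" unfolding mb_def by blast
lemma mb_below: "q \<in> mb phi p \<Longrightarrow> phi ! q \<le> phi ! p"
  using mb_tok unfolding tok_lt_def by fastforce
lemma mb_len: "q \<in> mb phi p \<Longrightarrow> q < length phi"
  using mb_tok unfolding tok_lt_def by fastforce
lemma mb_fin: "finite (mb phi p)"
  using mb_len by (meson finite_lessThan finite_subset lessThan_iff subsetI)

lemma mb_disj:
  assumes st: "structP phi" and q1: "q1 \<in> mb phi p" and q2: "q2 \<in> mb phi p" and ne: "q1 \<noteq> q2"
  shows "inf (phi ! q1) (phi ! q2) = (bot::'a::bounded_lattice)"
proof -
  have t1: "tok_lt phi q1 p" and t2: "tok_lt phi q2 p" using q1 q2 mb_tok by auto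
  have l1: "q1 < length phi" and l2: "q2 < length phi" using q1 q2 mb_len by auto
  have n1: "\<not> tok_lt phi q1 q2" using q1 t2 unfolding mb_def by blast
  have n2: "\<not> tok_lt phi q2 q1" using q2 t1 unfolding mb_def by blast
  show ?thesis
  proof (cases "phi ! q1 = phi ! q2")
    case True
    have "q1 < q2 \<or> q2 < q1" using ne by arith
    then have "tok_lt phi q1 q2 \<or> tok_lt phi q2 q1" using True l1 l2 unfolding tok_lt_def by auto
    with n1 n2 show ?thesis by blast
  next
    case False
    then show ?thesis using st l1 l2 n1 n2 unfolding structP_def tok_lt_def by blast
  qed
qed

lemma foldr_sup_ge: "q < length phi \<Longrightarrow> phi ! q \<le> foldr sup phi (bot::'a::bounded_lattice)"
proof (induction phi arbitrary: q)
  case Nil then show ?case by simp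
next
  case (Cons a phi)
  then show ?case by (cases q) (auto intro: le_supI2)
qed

context
  fixes imp :: "'a::bounded_lattice \<Rightarrow> 'a \<Rightarrow> 'a"
    and d :: "'a \<Rightarrow> 'a" and m :: "'a \<Rightarrow> real option"
  assumes H: "heyting_imp imp" and PM: "premeasure d m"
begin

lemma mu_tok_rep:
  assumes c: "c \<in> Min_i d" and st: "structP phi"
  shows "\<exists>D \<le> phi ! p. \<forall>x\<le>c. mu_tok m phi p x = the (m (inf x (phi ! p))) - the (m (inf x D))"
proof -
  obtain D where "D \<le> phi ! p" "\<forall>x\<le>c. (\<Sum>q\<in>mb phi p. the (m (inf x (phi ! q)))) = the (m (inf x D))"
    using sum_join[OF H PM c mb_fin, where B="mb phi p" and a="phi ! p" and phi=phi] mb_below mb_disj[OF st] by blast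
  then show ?thesis unfolding mu_tok_def by auto
qed

lemma mt_nonneg:
  assumes c: "c \<in> Min_i d" and st: "structP phi" and x: "x \<le> c"
  shows "0 \<le> mu_tok m phi p x"
proof -
  obtain D where D: "D \<le> phi ! p" "\<forall>x\<le>c. mu_tok m phi p x = the (m (inf x (phi ! p))) - the (m (inf x D))"
    using mu_tok_rep[OF c st] by blast
  have "the (m (inf x D)) \<le> the (m (inf x (phi ! p)))"
    using pm_mono[OF H PM c] D(1) x by (meson inf.cobounded1 inf_mono order_refl order_trans)
  then show ?thesis using D(2) x by simp
qed

lemma mt_mono:
  assumes c: "c \<in> Min_i d" and st: "structP phi" and xy: "x \<le> y" and y: "y \<le> c"
  shows "mu_tok m phi p x \<le> mu_tok m phi p y"
proof -
  obtain D where D: "D \<le> phi ! p" "\<forall>x\<le>c. mu_tok m phi p x = the (m (inf x (phi ! p))) - the (m (inf x D))"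
    using mu_tok_rep[OF c st] by blast
  define a where "a = phi ! p"
  have x: "x \<le> c" using xy y by simp
  have ii: "inf (inf x a) (inf y D) = inf x D"
    using xy D(1) unfolding a_def by (rule_tac antisym) (auto intro: le_infI1 le_infI2)
  have "the (m (sup (inf x a) (inf y D))) = the (m (inf x a)) + the (m (inf y D)) - the (m (inf x D))"
    using pm_mod[OF H PM c, of "inf x a" "inf y D"] x y ii by (simp add: le_infI1)
  moreover have "the (m (sup (inf x a) (inf y D))) \<le> the (m (inf y a))"
    using pm_mono[OF H PM c] xy y D(1) unfolding a_def
    by (meson inf.cobounded1 inf_mono le_infI1 le_supI order_refl)
  ultimately show ?thesis using D(2) x y unfolding a_def by simp
qed

lemma mt_mod:
  assumes c: "c \<in> Min_i d" and st: "structP phi" and x: "x \<le> c" and y: "y \<le> c"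
  shows "mu_tok m phi p (sup x y) = mu_tok m phi p x + mu_tok m phi p y - mu_tok m phi p (inf x y)"
proof -
  obtain D where D: "D \<le> phi ! p" "\<forall>x\<le>c. mu_tok m phi p x = the (m (inf x (phi ! p))) - the (m (inf x D))"
    using mu_tok_rep[OF c st] by blast
  have gen: "the (m (inf (sup x y) a)) = the (m (inf x a)) + the (m (inf y a)) - the (m (inf (inf x y) a))" for a
  proof -
    have "inf (sup x y) a = sup (inf x a) (inf y a)" using heyting_distrib[OF H, of a x y] by (simp add: inf_commute)
    moreover have "inf (inf x a) (inf y a) = inf (inf x y) a" by (simp add: inf_aci)
    ultimately show ?thesis using pm_mod[OF H PM c, of "inf x a" "inf y a"] x y by (simp add: le_infI1)
  qed
  have "sup x y \<le> c" "inf x y \<le> c" using x y by (auto simp: le_infI1)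
  then show ?thesis using D(2) x y gen[of "phi ! p"] gen[of D] by simp
qed

lemma mt_bot:
  assumes c: "c \<in> Min_i d"
  shows "mu_tok m phi p bot = 0"
  unfolding mu_tok_def using pm_bot[OF H PM c] by simp

end

lemma mt_y:
  assumes "\<forall>q<length phi. phi ! q \<le> z" "p < length phi"
  shows "mu_tok m phi p (inf x z) = mu_tok m phi p x"
proof -
  have *: "inf (inf x z) (phi ! q) = inf x (phi ! q)" if "q \<in> mb phi p" for q
    using assms(1) mb_len[OF that] by (metis inf.absorb2 inf.assoc)
  have **: "inf (inf x z) (phi ! p) = inf x (phi ! p)"
    using assms by (metis inf.absorb2 inf.assoc)
  show ?thesis unfolding mu_tok_def ** using * by simp
qed



context
  fixes imp :: "'a::bounded_lattice \<Rightarrow> 'a \<Rightarrow> 'a"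
    and dia box :: "'i \<Rightarrow> 'a \<Rightarrow> 'a"
    and R :: "'i \<Rightarrow> 'e \<Rightarrow> 'e \<Rightarrow> bool"
  assumes M: "monadic_HA imp dia box"
    and EQ: "\<forall>i. equivp (R i)"
    and FE: "finite (UNIV::'e set)"
begin

lemma block_closed:
  assumes b: "dia i b = b"
  shows "int_dia dia R i (\<lambda>e. if R i e e0 then b else bot) = (\<lambda>e. if R i e e0 then b else bot)"
proof
  fix e
  show "int_dia dia R i (\<lambda>e. if R i e e0 then b else bot) e = (if R i e e0 then b else bot)"
  proof (cases "R i e e0")
    case True
    have r: "R i e' e0" if "R i e' e" for e' using Rtrans[OF M EQ FE, OF that True] .
    have "{dia i (if R i e' e0 then b else bot) |e'. R i e' e} = {b}"
      using r b Rrefl[OF M EQ FE, of i e] by auto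
    then show ?thesis unfolding int_dia_def using True by simp
  next
    case False
    have r: "\<not> R i e' e0" if "R i e' e" for e'
    proof
      assume "R i e' e0"
      then have "R i e e0" using Rtrans[OF M EQ FE] Rsym[OF M EQ FE, OF that] by blast
      then show False using False by simp
    qed
    have "{dia i (if R i e' e0 then b else bot) |e'. R i e' e} = {bot}"
      using r dia_bot[OF M] Rrefl[OF M EQ FE, of i e] by auto
    then show ?thesis unfolding int_dia_def using False by simp
  qed
qed

lemma int_min_atom:
  assumes g: "g \<in> Min_i (int_dia dia R i)"
  shows "\<exists>c \<in> Min_i (dia i). \<forall>e. g e \<le> c"
proof -
  have gnb: "g \<noteq> bot" and gcl: "int_dia dia R i g = g"
    and gmin: "\<And>b. b < g \<Longrightarrow> int_dia dia R i b = b \<Longrightarrow> b = bot"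
    using g unfolding Min_i_def i_minimal_def by auto
  have gc: "dia i (g e) = g e" for e
    using int_dia_closed[OF M EQ FE, of i g e] gcl by simp
  have gclass: "R i e e0 \<Longrightarrow> g e = g e0" for e e0
    using int_dia_class[OF M EQ FE, of i e e0 g] gcl by simp
  obtain e0 where e0: "g e0 \<noteq> bot" using gnb by (auto simp: fun_eq_iff)
  define c where "c = g e0"
  define h where "h = (\<lambda>e. if R i e e0 then c else bot)"
  have hcl: "int_dia dia R i h = h" unfolding h_def by (rule block_closed) (simp add: c_def gc)
  have hg: "h \<le> g" unfolding h_def le_fun_def c_def using gclass by auto
  have hnb: "h \<noteq> bot" using e0 Rrefl[OF M EQ FE] unfolding h_def c_def by (auto simp: fun_eq_iff)
  have "\<not> h < g" using gmin hcl hnb by blast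
  then have gh: "g \<le> h" using hg by (simp add: less_le_not_le)
  have below: "\<forall>e. g e \<le> c"
  proof
    fix e
    have "g e \<le> h e" using gh by (simp add: le_fun_def)
    then show "g e \<le> c" unfolding h_def by (cases "R i e e0") (auto simp: bot_unique)
  qed
  have cmin: "c \<in> Min_i (dia i)"
    unfolding Min_i_def i_minimal_def
  proof (intro CollectI conjI allI impI)
    show "c \<noteq> bot" using e0 c_def by simp
    show "dia i c = c" using gc c_def by simp
  next
    fix b assume bb: "b < c \<and> dia i b = b"
    define k where "k = (\<lambda>e. if R i e e0 then b else bot)"
    have kcl: "int_dia dia R i k = k" unfolding k_def by (rule block_closed) (use bb in simp)
    have "k \<le> g" unfolding k_def le_fun_def using gclass bb c_def by (auto simp: less_imp_le)
    moreover have "\<not> g \<le> k"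
    proof
      assume "g \<le> k"
      then have "g e0 \<le> k e0" by (simp add: le_fun_def)
      then have "c \<le> b" using Rrefl[OF M EQ FE, of i e0] unfolding k_def c_def by simp
      with bb show False by (simp add: less_le_not_le)
    qed
    ultimately have "k < g" by (simp add: less_le_not_le)
    then have "k = bot" using gmin kcl by blast
    then have "k e0 = bot" by simp
    then show "b = bot" using Rrefl[OF M EQ FE, of i e0] unfolding k_def by simp
  qed
  show ?thesis using cmin below by blast
qed

lemma int_mindown_atom:
  assumes "f \<in> MinDown (int_dia dia R i)"
  shows "\<exists>c \<in> Min_i (dia i). \<forall>e. f e \<le> c"
proof -
  obtain g where "g \<in> Min_i (int_dia dia R i)" "f \<le> g" using assms unfolding MinDown_def by blast
  then obtain c where "c \<in> Min_i (dia i)" "\<forall>e. g e \<le> c" using int_min_atom by blast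
  then show ?thesis using \<open>f \<le> g\<close> unfolding le_fun_def by (meson order_trans)
qed

end



theorem proposition6:
  fixes imp :: "'a::bounded_lattice \<Rightarrow> 'a \<Rightarrow> 'a"
    and dia box :: "'i \<Rightarrow> 'a \<Rightarrow> 'a"
    and mu :: "'i \<Rightarrow> 'a \<Rightarrow> real option"
    and R :: "'i \<Rightarrow> 'e \<Rightarrow> 'e \<Rightarrow> bool"
    and P :: "'i \<Rightarrow> 'e \<Rightarrow> real"
    and phi :: "'a list"
    and pre :: "nat \<Rightarrow> 'e \<Rightarrow> real"
  assumes "APE imp dia box mu"
    and "prob_event_structure R P phi pre"
  shows "ApPE (int_imp imp) (int_dia dia R) (int_box box R) (int_mu dia mu R P phi pre) \<and>
         (\<forall>y :: 'e \<Rightarrow> 'a. (\<forall>e. foldr sup phi bot \<le> y e) \<longrightarrow>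
            (\<forall>i x. x \<in> dom (int_mu dia mu R P phi pre i) \<longrightarrow>
               int_mu dia mu R P phi pre i x = int_mu dia mu R P phi pre i (inf x y)))"
proof -
  have EP: "epistemic_HA imp dia box" and PMs: "\<And>i. premeasure (dia i) (mu i)"
    using assms(1) unfolding APE_def i_measure_def by auto
  have FA: "finite (UNIV::'a set)" and M: "monadic_HA imp dia box"
    and epi: "\<And>i a. sup (dia i a) (imp (dia i a) bot) = top"
    using EP unfolding epistemic_HA_def by auto
  have FE: "finite (UNIV::'e set)" and EQ: "\<forall>i. equivp (R i)"
    and Ppos: "\<And>i e. 0 < P i e" and st: "structP phi"
    and prenn: "\<And>p e. p < length phi \<Longrightarrow> 0 \<le> pre p e"
    using assms(2) unfolding prob_event_structure_def structP_def by auto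
  have H: "heyting_imp imp" by (rule mH_imp[OF M])
  define T where "T i f e p = P i e * mu_tok (mu i) phi p (f e) * pre p e" for i f e p
  have val: "int_mu dia mu R P phi pre i f = Some (\<Sum>e\<in>UNIV. \<Sum>p<length phi. T i f e p)"
    if "f \<in> MinDown (int_dia dia R i)" for i f
    using that unfolding int_mu_def T_def by simp
  have dom: "dom (int_mu dia mu R P phi pre i) = MinDown (int_dia dia R i)" for i
    unfolding int_mu_def dom_def by auto
  have atom: "\<exists>c \<in> Min_i (dia i). \<forall>e. f e \<le> c" if "f \<in> MinDown (int_dia dia R i)" for i f
    using int_mindown_atom[OF M EQ FE that] .
  have down: "f \<in> MinDown (int_dia dia R i)" if "g \<in> MinDown (int_dia dia R i)" "f \<le> g" for i f g
    using that unfolding MinDown_def using order_trans by blast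
  have part1: "ApPE (int_imp imp) (int_dia dia R) (int_box box R) (int_mu dia mu R P phi pre)"
    unfolding ApPE_def
  proof (intro conjI allI)
    show "epistemic_HA (int_imp imp) (int_dia dia R) (int_box box R)"
      unfolding epistemic_HA_def
    proof (intro conjI allI)
      show "finite (UNIV :: ('e \<Rightarrow> 'a) set)" by (rule fin_fun[OF FE FA])
      show "monadic_HA (int_imp imp) (int_dia dia R) (int_box box R)" by (rule int_monadic[OF M EQ FE])
    next
      fix i and a :: "'e \<Rightarrow> 'a"
      show "sup (int_dia dia R i a) (int_imp imp (int_dia dia R i a) bot) = top"
      proof
        fix e
        have "sup (dia i (int_dia dia R i a e)) (imp (dia i (int_dia dia R i a e)) bot) = top" by (rule epi)
        then show "sup (int_dia dia R i a) (int_imp imp (int_dia dia R i a) bot) e = top e"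
          unfolding int_imp_def using int_dia_closed[OF M EQ FE] by simp
      qed
    qed
  next
    fix i
    have PM: "premeasure (dia i) (mu i)" by (rule PMs)
    let ?m = "int_mu dia mu R P phi pre i"
    show "premeasure (int_dia dia R i) ?m"
      unfolding premeasure_def
    proof (intro conjI ballI allI impI)
      show "dom ?m = MinDown (int_dia dia R i)" by (rule dom)
    next
      fix x assume x: "x \<in> dom ?m"
      then have xd: "x \<in> MinDown (int_dia dia R i)" using dom by simp
      obtain c where c: "c \<in> Min_i (dia i)" "\<forall>e. x e \<le> c" using atom[OF xd] by blast
      have "0 \<le> T i x e p" if "p < length phi" for e p
        unfolding T_def using Ppos[of i e] prenn[OF that, of e] mt_nonneg[OF H PM c(1) st, of "x e" p] c(2)
        by simp
      then show "0 \<le> the (?m x)" using val[OF xd] by (auto intro!: sum_nonneg)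
    next
      fix x y assume x: "x \<in> dom ?m" and y: "y \<in> dom ?m" and xy: "x \<le> y"
      then have xd: "x \<in> MinDown (int_dia dia R i)" and yd: "y \<in> MinDown (int_dia dia R i)" using dom by auto
      obtain c where c: "c \<in> Min_i (dia i)" "\<forall>e. y e \<le> c" using atom[OF yd] by blast
      have "T i x e p \<le> T i y e p" if "p < length phi" for e p
      proof -
        have "mu_tok (mu i) phi p (x e) \<le> mu_tok (mu i) phi p (y e)"
          using mt_mono[OF H PM c(1) st, of "x e" "y e" p] c(2) xy by (simp add: le_fun_def)
        then show ?thesis unfolding T_def using Ppos[of i e] prenn[OF that, of e]
          by (simp add: mult_right_mono)
      qed
      then show "the (?m x) \<le> the (?m y)" using val[OF xd] val[OF yd] by (auto intro!: sum_mono)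
    next
      fix a b c assume a: "a \<in> Min_i (int_dia dia R i)" and ba: "b \<le> a" and ca: "c \<le> a"
      have ad: "a \<in> MinDown (int_dia dia R i)" using a unfolding MinDown_def by blast
      obtain cc where cc: "cc \<in> Min_i (dia i)" "\<forall>e. a e \<le> cc" using atom[OF ad] by blast
      have bd: "b \<in> MinDown (int_dia dia R i)" using down[OF ad ba] .
      have cd: "c \<in> MinDown (int_dia dia R i)" using down[OF ad ca] .
      have sd: "sup b c \<in> MinDown (int_dia dia R i)" using down[OF ad] ba ca by simp
      have id: "inf b c \<in> MinDown (int_dia dia R i)" using down[OF ad] ba by (simp add: le_infI1)
      have bc: "b e \<le> cc" "c e \<le> cc" for e using cc(2) ba ca unfolding le_fun_def by (meson order_trans)+
      have tt: "T i (sup b c) e p = T i b e p + T i c e p - T i (inf b c) e p" for e p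
        unfolding T_def sup_apply inf_apply mt_mod[OF H PM cc(1) st bc(1)[of e] bc(2)[of e], of p]
        by (simp add: algebra_simps)
      show "the (?m (sup b c)) = the (?m b) + the (?m c) - the (?m (inf b c))"
        unfolding val[OF sd] val[OF bd] val[OF cd] val[OF id] tt
        by (simp add: sum.distrib sum_subtractf)
    next
      assume ne: "dom ?m \<noteq> {}"
      then obtain f where fd: "f \<in> MinDown (int_dia dia R i)" using dom by auto
      obtain c where c: "c \<in> Min_i (dia i)" using atom[OF fd] by blast
      have bd: "bot \<in> MinDown (int_dia dia R i)" using down[OF fd] by simp
      show "?m bot = Some 0" unfolding val[OF bd] T_def using mt_bot[OF H PM c] by simp
    qed
  qed
  have part2: "int_mu dia mu R P phi pre i x = int_mu dia mu R P phi pre i (inf x y)"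
    if y: "\<forall>e. foldr sup phi bot \<le> y e" and x: "x \<in> dom (int_mu dia mu R P phi pre i)" for y x i
  proof -
    have xd: "x \<in> MinDown (int_dia dia R i)" using x dom by simp
    have xyd: "inf x y \<in> MinDown (int_dia dia R i)" using down[OF xd] by simp
    have "T i (inf x y) e p = T i x e p" if "p < length phi" for e p
    proof -
      have "\<forall>q<length phi. phi ! q \<le> y e" using foldr_sup_ge y order_trans by blast
      then show ?thesis unfolding T_def using mt_y[OF _ that, of "y e" "mu i" "x e"] by simp
    qed
    then show ?thesis unfolding val[OF xd] val[OF xyd] by simp
  qed
  show ?thesis using part1 part2 by blast
qed

end
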